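(* Let $G$ be a finite group and $\phi:G\to G$ an endomorphism. Let $W$ be the complex vector space of complex-valued class functions on $G$ (functions constant on ordinary conjugacy classes), and let $B:W\to W$ be the linear map $B(h)=h\circ\phi$. Then $R(\phi)=\mathrm{Tr}\,B$.
   Context: Two elements $\alpha,\alpha'\in G$ are $\phi$-conjugate if $\alpha'=\gamma\alpha\phi(\gamma)^{-1}$ for some $\gamma\in G$; the Reidemeister number $R(\phi)$ is the number of $\phi$-conjugacy classes. Since $\phi$ maps conjugate elements to conjugate elements, $h\circ\phi$ is again a class function. *)

theory Defs
  imports "HOL-Algebra.Algebra" "HOL-Library.Function_Algebras"
begin

definition cscale :: "complex \<Rightarrow> ('a \<Rightarrow> complex) \<Rightarrow> ('a \<Rightarrow> complex)" where
  "cscale c h = (\<lambda>x. c * h x)"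

definition class_functions :: "('a, 'b) monoid_scheme \<Rightarrow> ('a \<Rightarrow> complex) set" where
  "class_functions G = {h. (\<forall>x\<in>carrier G. \<forall>g\<in>carrier G. h (g \<otimes>\<^bsub>G\<^esub> x \<otimes>\<^bsub>G\<^esub> inv\<^bsub>G\<^esub> g) = h x)
                          \<and> (\<forall>x. x \<notin> carrier G \<longrightarrow> h x = 0)}"

definition is_basis_of :: "('a \<Rightarrow> complex) set \<Rightarrow> ('a \<Rightarrow> complex) set \<Rightarrow> bool" where
  "is_basis_of W b \<longleftrightarrow> b \<subseteq> W \<and> \<not> module.dependent cscale b \<and> module.span cscale b = W"

text \<open>Trace of a linear endomorphism f of a finite-dimensional subspace W:
  sum of diagonal coefficients of the matrix of f in a (chosen) basis of W.\<close>
definition lin_trace :: "('a \<Rightarrow> complex) set \<Rightarrow> (('a \<Rightarrow> complex) \<Rightarrow> ('a \<Rightarrow> complex)) \<Rightarrow> complex" where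
  "lin_trace W f = (let b = (SOME b. is_basis_of W b) in
                     \<Sum>v\<in>b. module.representation cscale b (f v) v)"

definition precomp :: "('a, 'b) monoid_scheme \<Rightarrow> ('a \<Rightarrow> 'a) \<Rightarrow> ('a \<Rightarrow> complex) \<Rightarrow> ('a \<Rightarrow> complex)" where
  "precomp G \<phi> h = (\<lambda>x. if x \<in> carrier G then h (\<phi> x) else 0)"

definition twisted_conj_rel :: "('a, 'b) monoid_scheme \<Rightarrow> ('a \<Rightarrow> 'a) \<Rightarrow> ('a \<times> 'a) set" where
  "twisted_conj_rel G \<phi> = {(a, a'). a \<in> carrier G \<and> a' \<in> carrier G \<and>
      (\<exists>\<gamma>\<in>carrier G. a' = \<gamma> \<otimes>\<^bsub>G\<^esub> a \<otimes>\<^bsub>G\<^esub> inv\<^bsub>G\<^esub> (\<phi> \<gamma>))}"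

definition reidemeister_number :: "('a, 'b) monoid_scheme \<Rightarrow> ('a \<Rightarrow> 'a) \<Rightarrow> nat" where
  "reidemeister_number G \<phi> = card (carrier G // twisted_conj_rel G \<phi>)"

end

theory Submission
  imports Defs
begin

lemma vs_cscale: "Vector_Spaces.vector_space cscale"
  by unfold_locales (simp_all add: cscale_def fun_eq_iff distrib_left distrib_right)

lemma module_cscale: "Modules.module cscale"
  using vs_cscale Vector_Spaces.module_iff_vector_space by blast

interpretation cs: Modules.module cscale by (rule module_cscale)


lemma sum_fun_app: "(\<Sum>a\<in>A. f a) x = (\<Sum>a\<in>A. f a x)"
  by (induct A rule: infinite_finite_induct) (auto simp: plus_fun_def zero_fun_def)

lemma mk_action:
  fixes G (structure)
  assumes G: "group G"
    and cl: "\<And>g x. g \<in> carrier G \<Longrightarrow> x \<in> E \<Longrightarrow> a g x \<in> E"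
    and one: "\<And>x. x \<in> E \<Longrightarrow> a \<one> x = x"
    and mul: "\<And>g h x. g \<in> carrier G \<Longrightarrow> h \<in> carrier G \<Longrightarrow> x \<in> E \<Longrightarrow> a (g \<otimes> h) x = a g (a h x)"
  shows "group_action G E (\<lambda>g. \<lambda>x\<in>E. a g x)"
proof -
  interpret group G by (rule G)
  have bij: "(\<lambda>x\<in>E. a g x) \<in> Bij E" if g: "g \<in> carrier G" for g
  proof -
    have inv1: "a (inv g) (a g x) = x" if "x \<in> E" for x
      using mul[of "inv g" g x] g that one by simp
    have inv2: "a g (a (inv g) x) = x" if "x \<in> E" for x
      using mul[of g "inv g" x] g that one by simp
    have "bij_betw (a g) E E"
      apply (rule bij_betwI[where g="a (inv g)"])
      using cl g inv1 inv2 by (auto simp: Pi_def)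
    then have "bij_betw (\<lambda>x\<in>E. a g x) E E"
      by (simp only: bij_betw_restrict_eq)
    then show ?thesis unfolding Bij_def by simp
  qed
  have hom: "(\<lambda>g. \<lambda>x\<in>E. a g x) \<in> hom G (BijGroup E)"
    unfolding hom_def
  proof (intro CollectI conjI ballI)
    show "(\<lambda>g. \<lambda>x\<in>E. a g x) \<in> carrier G \<rightarrow> carrier (BijGroup E)"
      using bij unfolding BijGroup_def by auto
    fix g h assume g: "g \<in> carrier G" and h: "h \<in> carrier G"
    have "(\<lambda>x\<in>E. a g x) \<otimes>\<^bsub>BijGroup E\<^esub> (\<lambda>x\<in>E. a h x) = compose E (\<lambda>x\<in>E. a g x) (\<lambda>x\<in>E. a h x)"
      using bij[OF g] bij[OF h] unfolding BijGroup_def by simp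
    also have "\<dots> = (\<lambda>x\<in>E. a (g \<otimes> h) x)"
      unfolding compose_def using g h cl mul by (intro restrict_ext) simp
    finally show "(\<lambda>x\<in>E. a (g \<otimes> h) x) = (\<lambda>x\<in>E. a g x) \<otimes>\<^bsub>BijGroup E\<^esub> (\<lambda>x\<in>E. a h x)" by simp
  qed
  show ?thesis
    unfolding group_action_def group_hom_def
    using hom G by (simp add: group_BijGroup group_hom_axioms.intro)
qed

locale rdm = group G for G (structure) + fixes \<phi>
  assumes fin: "finite (carrier G)" and hom: "\<phi> \<in> hom G G"
begin

definition conj where "conj g = (\<lambda>h\<in>carrier G. g \<otimes> h \<otimes> inv g)"
definition CL where "CL = orbits G (carrier G) conj"
definition ind :: "'a set \<Rightarrow> 'a \<Rightarrow> complex" where "ind C x = (if x \<in> C then 1 else 0)"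
definition pick where "pick C = (SOME x. x \<in> C)"

lemma conj_action: "group_action G (carrier G) conj"
  unfolding conj_def by (rule action_by_conjugation)

lemma orbit_conj: "x \<in> carrier G \<Longrightarrow> orbit G conj x = {g \<otimes> x \<otimes> inv g | g. g \<in> carrier G}"
  unfolding orbit_def conj_def by auto

lemma CL_sub: "C \<in> CL \<Longrightarrow> C \<subseteq> carrier G"
  using group_action.orbits_coverture[OF conj_action] unfolding CL_def by blast

lemma CL_orbit: "x \<in> carrier G \<Longrightarrow> orbit G conj x \<in> CL"
  unfolding CL_def orbits_def by blast

lemma in_orbit_self: "x \<in> carrier G \<Longrightarrow> x \<in> orbit G conj x"
  using group_action.orbit_refl[OF conj_action] by blast

lemma CL_eq_orbit: "C \<in> CL \<Longrightarrow> x \<in> C \<Longrightarrow> C = orbit G conj x"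
  using group_action.disjoint_union[OF conj_action, of C "orbit G conj x"]
    CL_orbit CL_sub in_orbit_self unfolding CL_def by blast

lemma CL_mem_iff: "C \<in> CL \<Longrightarrow> D \<in> CL \<Longrightarrow> x \<in> C \<Longrightarrow> x \<in> D \<longleftrightarrow> D = C"
  using CL_eq_orbit by blast

lemma CL_ne: "C \<in> CL \<Longrightarrow> C \<noteq> {}"
  unfolding CL_def orbits_def using in_orbit_self by blast

lemma pick_in: "C \<in> CL \<Longrightarrow> pick C \<in> C"
  unfolding pick_def using CL_ne by (simp add: some_in_eq)

lemma CL_closed: "C \<in> CL \<Longrightarrow> x \<in> C \<Longrightarrow> g \<in> carrier G \<Longrightarrow> g \<otimes> x \<otimes> inv g \<in> C"
proof -
  assume C: "C \<in> CL" and x: "x \<in> C" and g: "g \<in> carrier G"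
  have xc: "x \<in> carrier G" using CL_sub C x by blast
  show ?thesis using CL_eq_orbit[OF C x] orbit_conj[OF xc] g by blast
qed

lemma finite_CL: "finite CL"
proof -
  have "CL \<subseteq> Pow (carrier G)" using CL_sub by blast
  then show ?thesis using fin finite_subset by blast
qed

lemma ind_inj: "inj ind"
proof (rule injI)
  fix C D assume "ind C = ind D"
  then have "\<And>x. (x \<in> C) = (x \<in> D)" unfolding ind_def by (metis one_neq_zero)
  then show "C = D" by blast
qed

lemma conj_back: "x \<in> carrier G \<Longrightarrow> g \<in> carrier G \<Longrightarrow> inv g \<otimes> (g \<otimes> x \<otimes> inv g) \<otimes> inv (inv g) = x"
  by (simp add: m_assoc[symmetric]) (simp add: m_assoc)

lemma ind_class: "C \<in> CL \<Longrightarrow> ind C \<in> class_functions G"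
proof -
  assume C: "C \<in> CL"
  have "(g \<otimes> x \<otimes> inv g \<in> C) = (x \<in> C)" if "x \<in> carrier G" "g \<in> carrier G" for x g
  proof
    assume "g \<otimes> x \<otimes> inv g \<in> C"
    from CL_closed[OF C this, of "inv g"] show "x \<in> C" using that conj_back by simp
  qed (use CL_closed[OF C] that in blast)
  then show ?thesis unfolding class_functions_def ind_def using CL_sub[OF C] by auto
qed


lemma ind_eval: "D \<in> CL \<Longrightarrow> C \<in> CL \<Longrightarrow> x \<in> C \<Longrightarrow> ind D x = (if D = C then 1 else 0)"
proof -
  assume a: "D \<in> CL" "C \<in> CL" "x \<in> C"
  then have "x \<in> D \<longleftrightarrow> D = C" using CL_mem_iff by blast
  then show ?thesis unfolding ind_def by simp
qed

lemma W_expand: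
  assumes w: "w \<in> class_functions G"
  shows "w = (\<Sum>C\<in>CL. cscale (w (pick C)) (ind C))"
proof
  fix x
  have "(\<Sum>C\<in>CL. cscale (w (pick C)) (ind C)) x = (\<Sum>C\<in>CL. w (pick C) * ind C x)"
    by (simp add: sum_fun_app cscale_def)
  also have "\<dots> = w x"
  proof (cases "x \<in> carrier G")
    case False
    then have "ind C x = 0" if "C \<in> CL" for C using CL_sub[OF that] unfolding ind_def by auto
    then show ?thesis using False w unfolding class_functions_def by simp
  next
    case True
    define C0 where "C0 = orbit G conj x"
    have C0: "C0 \<in> CL" "x \<in> C0" using CL_orbit[OF True] in_orbit_self[OF True] C0_def by auto
    have "(\<Sum>C\<in>CL. w (pick C) * ind C x) = (\<Sum>C\<in>CL. if C = C0 then w (pick C) else 0)"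
      using ind_eval[OF _ C0] by (intro sum.cong) auto
    also have "\<dots> = w (pick C0)" using C0 finite_CL by simp
    also have "\<dots> = w x"
    proof -
      have "pick C0 \<in> orbit G conj x" using pick_in[OF C0(1)] C0_def by simp
      then obtain g where g: "g \<in> carrier G" "pick C0 = g \<otimes> x \<otimes> inv g" using orbit_conj[OF True] by auto
      then show ?thesis using w True unfolding class_functions_def by simp
    qed
    finally show ?thesis .
  qed
  finally show "w x = (\<Sum>C\<in>CL. cscale (w (pick C)) (ind C)) x" by simp
qed

lemma subspace_W: "cs.subspace (class_functions G)"
  unfolding cs.subspace_def class_functions_def
  by (simp add: cscale_def)

lemma span_E: "cs.span (ind ` CL) = class_functions G"
proof
  show "cs.span (ind ` CL) \<subseteq> class_functions G"
    using cs.span_minimal[OF _ subspace_W] ind_class by blast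
  show "class_functions G \<subseteq> cs.span (ind ` CL)"
  proof
    fix w assume w: "w \<in> class_functions G"
    have "(\<Sum>C\<in>CL. cscale (w (pick C)) (ind C)) \<in> cs.span (ind ` CL)"
      by (intro cs.span_sum cs.span_scale cs.span_base) auto
    then show "w \<in> cs.span (ind ` CL)" using W_expand[OF w] by simp
  qed
qed

lemma indep_E: "\<not> cs.dependent (ind ` CL)"
  unfolding cs.independent_explicit_module
proof (intro allI impI)
  fix t u v assume t: "finite t" "t \<subseteq> ind ` CL" and s: "(\<Sum>v\<in>t. cscale (u v) v) = 0" and v: "v \<in> t"
  obtain C where C: "C \<in> CL" "v = ind C" using t v by blast
  define x where "x = pick C"
  have x: "x \<in> C" using pick_in[OF C(1)] x_def by simp
  have "0 = (\<Sum>v\<in>t. cscale (u v) v) x" using s by simp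
  also have "\<dots> = (\<Sum>v'\<in>t. u v' * v' x)" by (simp add: sum_fun_app cscale_def)
  also have "\<dots> = (\<Sum>v'\<in>t. if v' = v then u v' else 0)"
  proof (rule sum.cong)
    fix v' assume "v' \<in> t"
    then obtain D where D: "D \<in> CL" "v' = ind D" using t by blast
    have "v' = v \<longleftrightarrow> D = C" using D C ind_inj by (auto dest: injD)
    then show "u v' * v' x = (if v' = v then u v' else 0)"
      using ind_eval[OF D(1) C(1) x] D C by simp
  qed simp
  also have "\<dots> = u v" using t v by simp
  finally show "u v = 0" by simp
qed

lemma basis_E: "is_basis_of (class_functions G) (ind ` CL)"
  unfolding is_basis_of_def using span_E indep_E ind_class by auto

lemma rep_eval:
  assumes w: "w \<in> class_functions G" and C: "C \<in> CL" and x: "x \<in> C"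
  shows "cs.representation (ind ` CL) w (ind C) = w x"
proof -
  let ?r = "cs.representation (ind ` CL) w"
  have injCL: "inj_on ind CL" using ind_inj by (rule inj_on_subset) simp
  have "w = (\<Sum>u\<in>ind ` CL. cscale (?r u) u)"
    using cs.sum_representation_eq[OF indep_E, of w "ind ` CL"] w span_E finite_CL by simp
  then have "w x = (\<Sum>u\<in>ind ` CL. cscale (?r u) u) x" by simp
  also have "\<dots> = (\<Sum>D\<in>CL. ?r (ind D) * ind D x)"
    using sum.reindex[OF injCL] by (simp add: sum_fun_app cscale_def)
  also have "\<dots> = (\<Sum>D\<in>CL. if D = C then ?r (ind D) else 0)"
    using ind_eval[OF _ C x] by (intro sum.cong) auto
  also have "\<dots> = ?r (ind C)" using C finite_CL by simp
  finally show ?thesis by simp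
qed


lemma ghom: "group_hom G G \<phi>"
  by (simp add: group_hom_def group_hom_axioms_def hom is_group)

lemma phi_closed[simp]: "x \<in> carrier G \<Longrightarrow> \<phi> x \<in> carrier G"
  using hom unfolding hom_def by auto

lemma phi_mult[simp]: "x \<in> carrier G \<Longrightarrow> y \<in> carrier G \<Longrightarrow> \<phi> (x \<otimes> y) = \<phi> x \<otimes> \<phi> y"
  using hom unfolding hom_def by auto

lemma phi_one[simp]: "\<phi> \<one> = \<one>"
  using group_hom.hom_one[OF ghom] .

lemma phi_inv[simp]: "x \<in> carrier G \<Longrightarrow> \<phi> (inv x) = inv (\<phi> x)"
  using group_hom.hom_inv[OF ghom] by simp

lemma phi_conj: "x \<in> carrier G \<Longrightarrow> g \<in> carrier G \<Longrightarrow> \<phi> (g \<otimes> x \<otimes> inv g) = \<phi> g \<otimes> \<phi> x \<otimes> inv (\<phi> g)"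
  by simp

lemma precomp_W: "h \<in> class_functions G \<Longrightarrow> precomp G \<phi> h \<in> class_functions G"
  unfolding class_functions_def precomp_def using phi_conj by auto

lemma precomp_add: "precomp G \<phi> (x + y) = precomp G \<phi> x + precomp G \<phi> y"
  unfolding precomp_def by (simp add: fun_eq_iff)

lemma precomp_scale: "precomp G \<phi> (cscale c x) = cscale c (precomp G \<phi> x)"
  unfolding precomp_def cscale_def by (simp add: fun_eq_iff)

lemma ind_phi: "(\<Sum>C\<in>CL. cs.representation (ind ` CL) (precomp G \<phi> (ind C)) (ind C))
   = (\<Sum>C\<in>CL. of_nat (if \<phi> (pick C) \<in> C then 1 else 0))"
proof (rule sum.cong)
  fix C assume C: "C \<in> CL"
  have pc: "pick C \<in> C" "pick C \<in> carrier G" using pick_in[OF C] CL_sub[OF C] by auto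
  have "cs.representation (ind ` CL) (precomp G \<phi> (ind C)) (ind C) = precomp G \<phi> (ind C) (pick C)"
    by (rule rep_eval[OF precomp_W[OF ind_class[OF C]] C pc(1)])
  also have "\<dots> = ind C (\<phi> (pick C))" using pc unfolding precomp_def by simp
  finally show "cs.representation (ind ` CL) (precomp G \<phi> (ind C)) (ind C) = of_nat (if \<phi> (pick C) \<in> C then 1 else 0)"
    unfolding ind_def by simp
qed simp

definition tw where "tw g = (\<lambda>h\<in>carrier G. g \<otimes> h \<otimes> inv (\<phi> g))"

lemma tw_action: "group_action G (carrier G) tw"
  unfolding tw_def
proof (rule mk_action[OF is_group])
  show "\<And>g x. g \<in> carrier G \<Longrightarrow> x \<in> carrier G \<Longrightarrow> g \<otimes> x \<otimes> inv (\<phi> g) \<in> carrier G" by simp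
  show "\<And>x. x \<in> carrier G \<Longrightarrow> \<one> \<otimes> x \<otimes> inv (\<phi> \<one>) = x" by simp
  fix g h x assume a: "g \<in> carrier G" "h \<in> carrier G" "x \<in> carrier G"
  then show "g \<otimes> h \<otimes> x \<otimes> inv (\<phi> (g \<otimes> h)) = g \<otimes> (h \<otimes> x \<otimes> inv (\<phi> h)) \<otimes> inv (\<phi> g)"
    by (simp add: inv_mult_group m_assoc)
qed

lemma orbit_tw: "x \<in> carrier G \<Longrightarrow> orbit G tw x = twisted_conj_rel G \<phi> `` {x}"
  unfolding orbit_def tw_def twisted_conj_rel_def by auto

lemma tw_quot: "carrier G // twisted_conj_rel G \<phi> = orbits G (carrier G) tw"
  unfolding quotient_def orbits_def using orbit_tw by auto


lemma phi_class: "C \<in> CL \<Longrightarrow> x \<in> C \<Longrightarrow> y \<in> C \<Longrightarrow> \<phi> x \<in> C \<Longrightarrow> \<phi> y \<in> C"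
proof -
  assume C: "C \<in> CL" and x: "x \<in> C" and y: "y \<in> C" and px: "\<phi> x \<in> C"
  have xc: "x \<in> carrier G" using CL_sub[OF C] x by blast
  have "y \<in> orbit G conj x" using CL_eq_orbit[OF C x] y by simp
  then obtain g where g: "g \<in> carrier G" "y = g \<otimes> x \<otimes> inv g" using orbit_conj[OF xc] by auto
  then have "\<phi> y = \<phi> g \<otimes> \<phi> x \<otimes> inv (\<phi> g)" using xc by simp
  then show ?thesis using CL_closed[OF C px, of "\<phi> g"] g by simp
qed

lemma invariants_eq: "x \<in> carrier G \<Longrightarrow>
  invariants (carrier G) tw x = {a \<in> carrier G. a \<otimes> \<phi> x \<otimes> inv a = x}"
proof -
  assume xc: "x \<in> carrier G"
  have "(x \<otimes> a \<otimes> inv (\<phi> x) = a) = (a \<otimes> \<phi> x \<otimes> inv a = x)" if a: "a \<in> carrier G" for a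
  proof -
    have "(x \<otimes> a \<otimes> inv (\<phi> x) = a) = (x \<otimes> a = a \<otimes> \<phi> x)"
      using inv_solve_right'[of a "x \<otimes> a" "\<phi> x"] a xc by simp
    also have "\<dots> = (a \<otimes> \<phi> x \<otimes> inv a = x)"
      using inv_solve_right'[of x "a \<otimes> \<phi> x" a] a xc by auto
    finally show ?thesis .
  qed
  then show ?thesis unfolding invariants_def tw_def by auto
qed

lemma stab_eq: "x \<in> carrier G \<Longrightarrow> stabilizer G conj x = {g \<in> carrier G. g \<otimes> x \<otimes> inv g = x}"
  unfolding stabilizer_def conj_def by auto

lemma card_inv_stab: assumes xc: "x \<in> carrier G"
  shows "(if \<phi> x \<in> orbit G conj x then 1 else 0) * card (stabilizer G conj x)
     = card (invariants (carrier G) tw x)"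
proof (cases "\<phi> x \<in> orbit G conj x")
  case True
  then obtain g0 where g0: "g0 \<in> carrier G" "\<phi> x = g0 \<otimes> x \<otimes> inv g0" using orbit_conj[OF xc] by auto
  have eq: "a \<otimes> \<phi> x \<otimes> inv a = (a \<otimes> g0) \<otimes> x \<otimes> inv (a \<otimes> g0)" if a: "a \<in> carrier G" for a
    using a g0 xc by (simp add: inv_mult_group m_assoc)
  have eq2: "(g \<otimes> inv g0) \<otimes> g0 = g" if "g \<in> carrier G" for g
    using that g0 by (simp add: m_assoc)
  have eq3: "(a \<otimes> g0) \<otimes> inv g0 = a" if "a \<in> carrier G" for a
    using that g0 by (simp add: m_assoc)
  have "bij_betw (\<lambda>a. a \<otimes> g0) {a \<in> carrier G. a \<otimes> \<phi> x \<otimes> inv a = x} {g \<in> carrier G. g \<otimes> x \<otimes> inv g = x}"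
    apply (rule bij_betwI[where g="\<lambda>g. g \<otimes> inv g0"])
    using g0 eq eq2 eq3 by auto
  then have "card {a \<in> carrier G. a \<otimes> \<phi> x \<otimes> inv a = x} = card {g \<in> carrier G. g \<otimes> x \<otimes> inv g = x}"
    by (rule bij_betw_same_card)
  then show ?thesis using True invariants_eq[OF xc] stab_eq[OF xc] by simp
next
  case False
  have "{a \<in> carrier G. a \<otimes> \<phi> x \<otimes> inv a = x} = {}"
  proof (rule ccontr)
    assume "{a \<in> carrier G. a \<otimes> \<phi> x \<otimes> inv a = x} \<noteq> {}"
    then obtain a where a: "a \<in> carrier G" "a \<otimes> \<phi> x \<otimes> inv a = x" by auto
    have "inv a \<otimes> x \<otimes> inv (inv a) = \<phi> x"
      using conj_back[of "\<phi> x" a] a xc by simp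
    then have "\<exists>g. \<phi> x = g \<otimes> x \<otimes> inv g \<and> g \<in> carrier G" using a(1)
      by (intro exI[of _ "inv a"]) simp
    then have "\<phi> x \<in> orbit G conj x" using orbit_conj[OF xc] by simp
    then show False using False by simp
  qed
  then have "invariants (carrier G) tw x = {}" by (simp only: invariants_eq[OF xc])
  then show ?thesis using False by simp
qed

lemma count_eq: "(\<Sum>C\<in>CL. (if \<phi> (pick C) \<in> C then 1 else 0::nat)) = card (orbits G (carrier G) tw)"
proof -
  have pos: "order G > 0" using fin one_closed unfolding order_def by (auto simp: card_gt_0_iff)
  have "(\<Sum>C\<in>CL. (if \<phi> (pick C) \<in> C then 1 else 0::nat)) * order G
      = (\<Sum>C\<in>CL. \<Sum>x\<in>C. (if \<phi> x \<in> orbit G conj x then 1 else 0) * card (stabilizer G conj x))"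
    unfolding sum_distrib_right
  proof (rule sum.cong)
    fix C assume C: "C \<in> CL"
    have "(if \<phi> (pick C) \<in> C then 1 else 0) * order G
        = (if \<phi> (pick C) \<in> C then 1 else 0) * (\<Sum>x\<in>C. card (stabilizer G conj x))"
      using group_action.card_stablizer_sum[OF conj_action fin] C unfolding CL_def by simp
    also have "\<dots> = (\<Sum>x\<in>C. (if \<phi> (pick C) \<in> C then 1 else 0) * card (stabilizer G conj x))"
      by (simp add: sum_distrib_left)
    also have "\<dots> = (\<Sum>x\<in>C. (if \<phi> x \<in> orbit G conj x then 1 else 0) * card (stabilizer G conj x))"
    proof (rule sum.cong)
      fix x assume x: "x \<in> C"
      have "(\<phi> (pick C) \<in> C) = (\<phi> x \<in> C)" using phi_class[OF C] pick_in[OF C] x by blast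
      then show "(if \<phi> (pick C) \<in> C then 1 else 0) * card (stabilizer G conj x)
          = (if \<phi> x \<in> orbit G conj x then 1 else 0) * card (stabilizer G conj x)"
        using CL_eq_orbit[OF C x] by simp
    qed simp
    finally show "(if \<phi> (pick C) \<in> C then 1 else 0) * order G
        = (\<Sum>x\<in>C. (if \<phi> x \<in> orbit G conj x then 1 else 0) * card (stabilizer G conj x))" .
  qed simp
  also have "\<dots> = (\<Sum>x\<in>carrier G. (if \<phi> x \<in> orbit G conj x then 1 else 0) * card (stabilizer G conj x))"
    unfolding CL_def by (rule group_action.disjoint_sum[OF conj_action fin])
  also have "\<dots> = (\<Sum>x\<in>carrier G. card (invariants (carrier G) tw x))"
    using card_inv_stab by simp
  also have "\<dots> = card (orbits G (carrier G) tw) * order G"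
    using group_action.burnside[OF tw_action fin fin] by simp
  finally show ?thesis using pos by simp
qed

end

lemma (in Modules.module) trace_basis_indep:
  assumes ib: "independent b" and ie: "independent e" and fb: "finite b" and fe: "finite e"
    and sp: "span b = span e"
    and fadd: "\<And>x y. f (x + y) = f x + f y" and fsc: "\<And>c x. f (c *s x) = c *s f x"
    and fW: "\<And>x. x \<in> span e \<Longrightarrow> f x \<in> span e"
  shows "(\<Sum>v\<in>b. representation b (f v) v) = (\<Sum>u\<in>e. representation e (f u) u)"
proof -
  have f0: "f 0 = 0" using fsc[of 0 0] by simp
  have fsum: "f (\<Sum>i\<in>I. g i) = (\<Sum>i\<in>I. f (g i))" for g :: "'c \<Rightarrow> 'b" and I
    by (induct I rule: infinite_finite_induct) (simp_all add: f0 fadd)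
  have ine: "v \<in> span e" if "v \<in> b" for v using that sp span_base by blast
  have fb': "f x \<in> span b" if "x \<in> span e" for x using fW that sp by simp
  have fe': "f u \<in> span b" if "u \<in> e" for u using fb' span_base that by blast
  have step1: "representation b (f v) v = (\<Sum>u\<in>e. representation e v u * representation b (f u) v)"
    if v: "v \<in> b" for v
  proof -
    have "v = (\<Sum>u\<in>e. representation e v u *s u)"
      using sum_representation_eq[OF ie ine[OF v] fe] by simp
    then have "f v = (\<Sum>u\<in>e. representation e v u *s f u)"
      by (metis (no_types, lifting) fsum fsc sum.cong)
    then have "representation b (f v) = (\<lambda>x. \<Sum>u\<in>e. representation b (representation e v u *s f u) x)"
      using representation_sum[OF ib, of e "\<lambda>u. representation e v u *s f u"] fe' span_scale by simp
    also have "\<dots> = (\<lambda>x. \<Sum>u\<in>e. representation e v u * representation b (f u) x)"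
      using representation_scale[OF ib fe'] by simp
    finally show ?thesis by simp
  qed
  have step2: "(\<Sum>v\<in>b. representation e v u * representation b (f u) v) = representation e (f u) u"
    if u: "u \<in> e" for u
  proof -
    have fu: "f u \<in> span b" using fe'[OF u] .
    have "f u = (\<Sum>v\<in>b. representation b (f u) v *s v)"
      using sum_representation_eq[OF ib fu fb] by simp
    then have "representation e (f u) = representation e (\<Sum>v\<in>b. representation b (f u) v *s v)"
      by simp
    also have "\<dots> = (\<lambda>x. \<Sum>v\<in>b. representation e (representation b (f u) v *s v) x)"
      using representation_sum[OF ie, of b "\<lambda>v. representation b (f u) v *s v"] ine span_scale by simp
    also have "\<dots> = (\<lambda>x. \<Sum>v\<in>b. representation b (f u) v * representation e v x)"
      using representation_scale[OF ie ine] by simp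
    finally show ?thesis by (simp add: mult.commute)
  qed
  have "(\<Sum>v\<in>b. representation b (f v) v) = (\<Sum>v\<in>b. \<Sum>u\<in>e. representation e v u * representation b (f u) v)"
    using step1 by simp
  also have "\<dots> = (\<Sum>u\<in>e. \<Sum>v\<in>b. representation e v u * representation b (f u) v)"
    by (rule sum.swap)
  also have "\<dots> = (\<Sum>u\<in>e. representation e (f u) u)"
    using step2 by simp
  finally show ?thesis .
qed

lemma lin_trace_eq:
  assumes e: "is_basis_of W e" and fe: "finite e"
    and fadd: "\<And>x y. f (x + y) = f x + f y" and fsc: "\<And>c x. f (cscale c x) = cscale c (f x)"
    and fW: "\<And>x. x \<in> W \<Longrightarrow> f x \<in> W"
  shows "lin_trace W f = (\<Sum>u\<in>e. module.representation cscale e (f u) u)"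
proof -
  define b where "b = (SOME b. is_basis_of W b)"
  have b: "is_basis_of W b" unfolding b_def using e by (rule someI)
  have fb: "finite b"
    using vector_space.independent_span_bound[OF vs_cscale fe, of b] b e
    unfolding is_basis_of_def by blast
  have "(\<Sum>v\<in>b. module.representation cscale b (f v) v) = (\<Sum>u\<in>e. module.representation cscale e (f u) u)"
    apply (rule module.trace_basis_indep[OF module_cscale _ _ fb fe])
    using b e fadd fsc fW unfolding is_basis_of_def by auto
  then show ?thesis unfolding lin_trace_def b_def[symmetric] Let_def by simp
qed

theorem theorem4:
  fixes G :: "('a, 'b) monoid_scheme" and \<phi> :: "'a \<Rightarrow> 'a"
  assumes "group G" and "finite (carrier G)" and "\<phi> \<in> hom G G"
  shows "of_nat (reidemeister_number G \<phi>) = lin_trace (class_functions G) (precomp G \<phi>)"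
proof -
  interpret rdm G \<phi>
    using assms by (simp add: rdm_def rdm_axioms_def)
  have injCL: "inj_on ind CL" using ind_inj by (rule inj_on_subset) simp
  have "lin_trace (class_functions G) (precomp G \<phi>)
      = (\<Sum>u\<in>ind ` CL. module.representation cscale (ind ` CL) (precomp G \<phi> u) u)"
    by (rule lin_trace_eq[OF basis_E]) (simp_all add: finite_CL precomp_add precomp_scale precomp_W)
  also have "\<dots> = (\<Sum>C\<in>CL. module.representation cscale (ind ` CL) (precomp G \<phi> (ind C)) (ind C))"
    by (simp add: sum.reindex[OF injCL])
  also have "\<dots> = (\<Sum>C\<in>CL. of_nat (if \<phi> (pick C) \<in> C then 1 else 0))"
    by (rule ind_phi)
  also have "\<dots> = of_nat (\<Sum>C\<in>CL. (if \<phi> (pick C) \<in> C then 1 else 0::nat))"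
    by simp
  also have "\<dots> = of_nat (reidemeister_number G \<phi>)"
    unfolding count_eq reidemeister_number_def tw_quot ..
  finally show ?thesis by simp
qed

end
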